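(* Let $X=\{a_1,\dots,a_\ell\}$ be a finite set of $\ell$ distinct points and $N\ge 2$, and let $\mu_*$ be an extreme point of $\mathcal{P}_{N\text{-}rep}(X^2)$ with one-point marginal $\lambda$. Then: (a) $\mu_*$ is the unique maximizer over $\mu\in\mathcal{P}_{N\text{-}rep}(X^2)$ of $$J_\lambda[\mu]=\frac{2N}{N-1}\sum_{i=1}^\ell\lambda_i(M_1\mu)_i+W[\mu];$$ (b) in particular, $\mu_*$ is the unique maximizer of $W[\mu]$ over $\mu\in\mathcal{P}_{N\text{-}rep}(X^2)$ subject to $M_1\mu=\lambda$.
   Context: Probability measures on $X$ are identified with vectors $(\lambda_i)_{i}$, $\lambda_i=\lambda(\{a_i\})$; for a measure $\mu$ on $X^2$, $\mu_{ij}=\mu(\{(a_i,a_j)\})$ and $(M_1\mu)_i=\sum_j\mu_{ij}$ is its first marginal. A probability measure $\gamma$ on $X^N$ is symmetric if $\gamma(A_1\times\cdots\times A_N)=\gamma(A_{\sigma(1)}\times\cdots\times A_{\sigma(N)})$ for all $A_i\subseteq X$ and all permutations $\sigma$; a probability measure $\mu$ on $X^2$ is $N$-representable if $\mu(A)=\gamma(A\times X^{N-2})$ for all $A\subseteq X^2$ for some symmetric probability measure $\gamma$ on $X^N$; $\mathcal{P}_{N\text{-}rep}(X^2)$ is the set of these. $W[\mu]=\int_{X\times X}d(x,y)^p\,d\mu(x,y)=\sum_{i\ne j}\mu_{ij}$ is the Wasserstein cost ($1\le p<\infty$) with respect to the discrete metric $d(x,y)=1$ if $x\neq y$, $d(x,x)=0$.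 *)

theory Defs
  imports "HOL-Analysis.Analysis" "HOL-Combinatorics.Permutations"
begin

text \<open>Discrete probability measures on the finite set X, on X^2 and on X^N are
  represented by their point masses (functions to real vanishing outside the carrier).
  N-tuples are extensional functions on {..<N}; coordinates 0 and 1 are the first two.\<close>

definition tuples :: "'a set \<Rightarrow> nat \<Rightarrow> (nat \<Rightarrow> 'a) set" where
  "tuples X N = PiE {..<N} (\<lambda>_. X)"

definition prob_on :: "'b set \<Rightarrow> ('b \<Rightarrow> real) \<Rightarrow> bool" where
  "prob_on S m \<longleftrightarrow> (\<forall>x. 0 \<le> m x) \<and> (\<forall>x. x \<notin> S \<longrightarrow> m x = 0) \<and> (\<Sum>x\<in>S. m x) = 1"

definition meas :: "('b \<Rightarrow> real) \<Rightarrow> 'b set \<Rightarrow> real" where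
  "meas m A = (\<Sum>x\<in>A. m x)"

definition symmetric_meas :: "'a set \<Rightarrow> nat \<Rightarrow> ((nat \<Rightarrow> 'a) \<Rightarrow> real) \<Rightarrow> bool" where
  "symmetric_meas X N \<gamma> \<longleftrightarrow>
     (\<forall>A \<sigma>. (\<forall>i<N. A i \<subseteq> X) \<longrightarrow> \<sigma> permutes {..<N} \<longrightarrow>
        meas \<gamma> (PiE {..<N} A) = meas \<gamma> (PiE {..<N} (\<lambda>i. A (\<sigma> i))))"

definition N_rep :: "'a set \<Rightarrow> nat \<Rightarrow> ('a \<times> 'a \<Rightarrow> real) set" where
  "N_rep X N = {\<mu>. prob_on (X \<times> X) \<mu> \<and>
     (\<exists>\<gamma>. prob_on (tuples X N) \<gamma> \<and> symmetric_meas X N \<gamma> \<and>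
        (\<forall>A. A \<subseteq> X \<times> X \<longrightarrow>
           meas \<mu> A = meas \<gamma> {t \<in> tuples X N. (t 0, t 1) \<in> A}))}"

text \<open>Extreme point of a set of functions (same shape as the library's extreme_point_of,
  with open segments written out since function spaces carry no real_vector instance).\<close>
definition extreme_pt :: "('b \<Rightarrow> real) \<Rightarrow> ('b \<Rightarrow> real) set \<Rightarrow> bool" where
  "extreme_pt x S \<longleftrightarrow> x \<in> S \<and>
     (\<forall>a\<in>S. \<forall>b\<in>S. \<forall>u. 0 < u \<and> u < 1 \<and> a \<noteq> b \<longrightarrow>
        x \<noteq> (\<lambda>p. (1 - u) * a p + u * b p))"

definition marg1 :: "'a set \<Rightarrow> ('a \<times> 'a \<Rightarrow> real) \<Rightarrow> 'a \<Rightarrow> real" where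
  "marg1 X \<mu> x = (\<Sum>y\<in>X. \<mu> (x, y))"

text \<open>Wasserstein cost for the discrete metric: d(x,y)^p = 1 if x \<noteq> y, 0 otherwise.\<close>
definition W_cost :: "'a set \<Rightarrow> ('a \<times> 'a \<Rightarrow> real) \<Rightarrow> real" where
  "W_cost X \<mu> = (\<Sum>p\<in>X \<times> X. (if fst p \<noteq> snd p then 1 else 0) * \<mu> p)"

definition J_fun :: "'a set \<Rightarrow> nat \<Rightarrow> ('a \<Rightarrow> real) \<Rightarrow> ('a \<times> 'a \<Rightarrow> real) \<Rightarrow> real" where
  "J_fun X N lam \<mu> = (2 * real N / (real N - 1)) * (\<Sum>x\<in>X. lam x * marg1 X \<mu> x) + W_cost X \<mu>"

end

theory Submission
  imports Defs
begin

definition occ :: "nat \<Rightarrow> (nat \<Rightarrow> 'a) \<Rightarrow> 'a \<Rightarrow> real" where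
  "occ N t x = (\<Sum>a<N. if t a = x then 1 else 0)"

definition phi :: "nat \<Rightarrow> (nat \<Rightarrow> nat) \<Rightarrow> (nat \<Rightarrow> 'a) \<Rightarrow> (nat \<Rightarrow> 'a)" where
  "phi N \<sigma> t = (\<lambda>i\<in>{..<N}. t (\<sigma> i))"

definition psym :: "'a set \<Rightarrow> nat \<Rightarrow> ((nat \<Rightarrow> 'a) \<Rightarrow> real) \<Rightarrow> bool" where
  "psym X N g \<longleftrightarrow> (\<forall>t\<in>tuples X N. \<forall>\<sigma>. \<sigma> permutes {..<N} \<longrightarrow> g (phi N \<sigma> t) = g t)"

lemma perm_lt: "\<sigma> permutes {..<N} \<Longrightarrow> i < N \<Longrightarrow> \<sigma> i < N"
  using permutes_in_image[of \<sigma> "{..<N}" i] by simp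

lemma perm_inv_lt: "\<sigma> permutes {..<N} \<Longrightarrow> i < N \<Longrightarrow> inv \<sigma> i < N"
  using perm_lt permutes_inv by blast

lemma phi_in: "\<sigma> permutes {..<N} \<Longrightarrow> t \<in> tuples X N \<Longrightarrow> phi N \<sigma> t \<in> tuples X N"
  unfolding phi_def tuples_def
  by (auto simp: PiE_iff perm_lt)

lemma phi_inv: "\<sigma> permutes {..<N} \<Longrightarrow> t \<in> tuples X N \<Longrightarrow> phi N (inv \<sigma>) (phi N \<sigma> t) = t"
  unfolding phi_def tuples_def
  apply (rule ext)
  apply (auto simp: PiE_iff perm_inv_lt permutes_inverses extensional_def)
  done

lemma phi_bij: assumes s: "\<sigma> permutes {..<N}" shows "bij_betw (phi N \<sigma>) (tuples X N) (tuples X N)"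
proof (rule bij_betw_byWitness[where f'="phi N (inv \<sigma>)"])
  have si: "inv \<sigma> permutes {..<N}" using permutes_inv[OF s] .
  have ii: "inv (inv \<sigma>) = \<sigma>" using permutes_inv_inv[OF s] .
  show "\<forall>a\<in>tuples X N. phi N (inv \<sigma>) (phi N \<sigma> a) = a"
    using phi_inv[OF s, of _ X] by simp
  show "\<forall>a'\<in>tuples X N. phi N \<sigma> (phi N (inv \<sigma>) a') = a'"
    using phi_inv[OF si, of _ X] ii by simp
  show "phi N \<sigma> ` tuples X N \<subseteq> tuples X N" using phi_in[OF s] by auto
  show "phi N (inv \<sigma>) ` tuples X N \<subseteq> tuples X N" using phi_in[OF si] by auto
qed

lemma finite_tuples: "finite X \<Longrightarrow> finite (tuples X N)"
  unfolding tuples_def by (simp add: finite_PiE)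

lemma PiE_singletons: "PiE I (\<lambda>i. {s i}) = {restrict s I}"
proof
  show "PiE I (\<lambda>i. {s i}) \<subseteq> {restrict s I}"
  proof
    fix u assume u: "u \<in> PiE I (\<lambda>i. {s i})"
    have "u i = restrict s I i" for i
    proof (cases "i \<in> I")
      case True then show ?thesis using u by (simp add: PiE_iff)
    next
      case False then show ?thesis using u by (simp add: PiE_iff extensional_def)
    qed
    then show "u \<in> {restrict s I}" by auto
  qed
next
  show "{restrict s I} \<subseteq> PiE I (\<lambda>i. {s i})" by simp
qed

lemma restrict_tuple: "t \<in> tuples X N \<Longrightarrow> restrict t {..<N} = t"
  unfolding tuples_def by (rule PiE_restrict)

lemma sym_psym:
  assumes "symmetric_meas X N g"
  shows "psym X N g"
  unfolding psym_def
proof (intro ballI allI impI)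
  fix t \<sigma> assume t: "t \<in> tuples X N" and s: "\<sigma> permutes {..<N}"
  have 1: "PiE {..<N} (\<lambda>i. {t i}) = {t}"
    using PiE_singletons[of "{..<N}" t] restrict_tuple[OF t] by simp
  have 2: "PiE {..<N} (\<lambda>i. {t (\<sigma> i)}) = {phi N \<sigma> t}"
    using PiE_singletons[of "{..<N}" "\<lambda>i. t (\<sigma> i)"] unfolding phi_def by simp
  have "\<forall>i<N. {t i} \<subseteq> X" using t unfolding tuples_def by (simp add: PiE_iff)
  then have "meas g (PiE {..<N} (\<lambda>i. {t i})) = meas g (PiE {..<N} (\<lambda>i. {t (\<sigma> i)}))"
    using assms s unfolding symmetric_meas_def by (rule_tac allE[of _ "\<lambda>i. {t i}"], simp, blast)
  then show "g (phi N \<sigma> t) = g t" using 1 2 by (simp add: meas_def)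
qed


lemma PiE_sub_tuples: "\<forall>i<N. A i \<subseteq> X \<Longrightarrow> PiE {..<N} A \<subseteq> tuples X N"
  unfolding tuples_def by (auto simp: PiE_iff)

lemma phi_PiE: assumes s: "\<sigma> permutes {..<N}" and t: "t \<in> PiE {..<N} A"
  shows "phi N \<sigma> t \<in> PiE {..<N} (\<lambda>i. A (\<sigma> i))"
  using t perm_lt[OF s] unfolding phi_def by (simp add: PiE_iff)

lemma psym_sym:
  assumes ps: "psym X N g"
  shows "symmetric_meas X N g"
  unfolding symmetric_meas_def
proof (intro allI impI)
  fix A \<sigma> assume A: "\<forall>i<N. A i \<subseteq> X" and s: "\<sigma> permutes {..<N}"
  have si: "inv \<sigma> permutes {..<N}" using permutes_inv[OF s] .
  have ii: "inv (inv \<sigma>) = \<sigma>" using permutes_inv_inv[OF s] .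
  have A2: "\<forall>i<N. A (\<sigma> i) \<subseteq> X" using A perm_lt[OF s] by blast
  have sub1: "PiE {..<N} A \<subseteq> tuples X N" using PiE_sub_tuples[OF A] .
  have sub2: "PiE {..<N} (\<lambda>i. A (\<sigma> i)) \<subseteq> tuples X N" using PiE_sub_tuples[OF A2] .
  have bij: "bij_betw (phi N \<sigma>) (PiE {..<N} A) (PiE {..<N} (\<lambda>i. A (\<sigma> i)))"
  proof (rule bij_betw_byWitness[where f'="phi N (inv \<sigma>)"])
    show "\<forall>a\<in>PiE {..<N} A. phi N (inv \<sigma>) (phi N \<sigma> a) = a"
      using phi_inv[OF s, of _ X] sub1 by blast
    show "\<forall>a'\<in>PiE {..<N} (\<lambda>i. A (\<sigma> i)). phi N \<sigma> (phi N (inv \<sigma>) a') = a'"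
      using phi_inv[OF si, of _ X] ii sub2 by auto
    show "phi N \<sigma> ` PiE {..<N} A \<subseteq> PiE {..<N} (\<lambda>i. A (\<sigma> i))"
      using phi_PiE[OF s] by blast
    have "phi N (inv \<sigma>) ` PiE {..<N} (\<lambda>i. A (\<sigma> i)) \<subseteq> PiE {..<N} (\<lambda>i. A (\<sigma> (inv \<sigma> i)))"
      using phi_PiE[OF si, of _ "\<lambda>i. A (\<sigma> i)"] by blast
    also have "(\<lambda>i. A (\<sigma> (inv \<sigma> i))) = A"
      using permutes_inverses(1)[OF s] by simp
    finally show "phi N (inv \<sigma>) ` PiE {..<N} (\<lambda>i. A (\<sigma> i)) \<subseteq> PiE {..<N} A" .
  qed
  have "meas g (PiE {..<N} (\<lambda>i. A (\<sigma> i))) = (\<Sum>t\<in>PiE {..<N} A. g (phi N \<sigma> t))"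
    unfolding meas_def using sum.reindex_bij_betw[OF bij, of g] by simp
  also have "\<dots> = (\<Sum>t\<in>PiE {..<N} A. g t)"
    using ps sub1 s unfolding psym_def by (intro sum.cong) auto
  finally show "meas g (PiE {..<N} A) = meas g (PiE {..<N} (\<lambda>i. A (\<sigma> i)))"
    by (simp add: meas_def)
qed

lemma psym_reindex:
  assumes ps: "psym X N g" and s: "\<sigma> permutes {..<N}" and N: "N \<ge> 2"
  shows "(\<Sum>t\<in>tuples X N. g t * (if t (\<sigma> 0) = x \<and> t (\<sigma> 1) = y then 1 else 0))
       = (\<Sum>t\<in>tuples X N. g t * (if t 0 = x \<and> t 1 = y then 1 else 0))"
proof -
  have "(\<Sum>t\<in>tuples X N. g t * (if t 0 = x \<and> t 1 = y then 1 else 0))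
     = (\<Sum>t\<in>tuples X N. g (phi N \<sigma> t) * (if phi N \<sigma> t 0 = x \<and> phi N \<sigma> t 1 = y then 1 else 0))"
    using sum.reindex_bij_betw[OF phi_bij[OF s, of X], of "\<lambda>t. g t * (if t 0 = x \<and> t 1 = y then 1 else 0)"]
    by simp
  also have "\<dots> = (\<Sum>t\<in>tuples X N. g t * (if t (\<sigma> 0) = x \<and> t (\<sigma> 1) = y then 1 else 0))"
    using ps s N unfolding psym_def by (intro sum.cong) (auto simp: phi_def)
  finally show ?thesis by simp
qed

lemma exists_perm:
  assumes "a < (N::nat)" "b < N" "a \<noteq> b" "N \<ge> 2"
  shows "\<exists>\<sigma>. \<sigma> permutes {..<N} \<and> \<sigma> 0 = a \<and> \<sigma> 1 = b"
proof (cases "a = 1")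
  case True
  show ?thesis
  proof (cases "b = 0")
    case True
    then show ?thesis using \<open>a = 1\<close> assms
      by (intro exI[of _ "Transposition.transpose 0 1"]) (auto intro: permutes_swap_id)
  next
    case False
    have p: "Transposition.transpose 0 b \<circ> Transposition.transpose 0 1 permutes {..<N}"
      using assms by (intro permutes_compose permutes_swap_id) auto
    show ?thesis using False True assms
      by (intro exI[of _ "Transposition.transpose 0 b \<circ> Transposition.transpose 0 1"]) (intro conjI[OF p], auto simp: Transposition.transpose_def)
  qed
next
  case False
  have p: "Transposition.transpose 1 b \<circ> Transposition.transpose 0 a permutes {..<N}"
    using assms by (intro permutes_compose permutes_swap_id) auto
  show ?thesis using False assms
    by (intro exI[of _ "Transposition.transpose 1 b \<circ> Transposition.transpose 0 a"]) (intro conjI[OF p], auto simp: Transposition.transpose_def)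
qed


definition pm :: "'a set \<Rightarrow> nat \<Rightarrow> ((nat \<Rightarrow> 'a) \<Rightarrow> real) \<Rightarrow> 'a \<times> 'a \<Rightarrow> real" where
  "pm X N g p = (\<Sum>t\<in>tuples X N. g t * (if (t 0, t 1) = p then 1 else 0))"

definition Pt :: "'a set \<Rightarrow> nat \<Rightarrow> (nat \<Rightarrow> 'a) \<Rightarrow> 'a \<times> 'a \<Rightarrow> real" where
  "Pt X N t p = (if p \<in> X \<times> X then (occ N t (fst p) * occ N t (snd p)
      - (if fst p = snd p then occ N t (fst p) else 0)) / (real N * (real N - 1)) else 0)"

lemma pair_count:
  "(\<Sum>a<N. \<Sum>b<N. if a \<noteq> b then (if t a = x then 1 else 0) * (if t b = y then 1 else 0) else 0)
   = occ N t x * occ N t y - (if x = y then occ N t x else (0::real))"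
proof -
  have "(\<Sum>a<N. \<Sum>b<N. if a \<noteq> b then (if t a = x then 1 else 0) * (if t b = y then 1 else 0) else 0)
     = (\<Sum>a<N. (\<Sum>b<N. (if t a = x then 1 else 0) * (if t b = y then 1 else 0))
          - (if t a = x then 1 else 0) * (if t a = y then 1 else (0::real)))"
  proof (rule sum.cong[OF refl])
    fix a assume a: "a \<in> {..<N}"
    have "(\<Sum>b<N. (if t a = x then 1 else 0) * (if t b = y then 1 else (0::real)))
      = (\<Sum>b<N. if a \<noteq> b then (if t a = x then 1 else 0) * (if t b = y then 1 else 0) else 0)
        + (if t a = x then 1 else 0) * (if t a = y then 1 else (0::real))"
    proof -
      have "(\<Sum>b<N. (if t a = x then 1 else 0) * (if t b = y then 1 else (0::real)))
        = (\<Sum>b<N. (if a \<noteq> b then (if t a = x then 1 else 0) * (if t b = y then 1 else 0) else 0)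
            + (if b = a then (if t a = x then 1 else 0) * (if t a = y then 1 else (0::real)) else 0))"
        by (intro sum.cong) auto
      also have "\<dots> = (\<Sum>b<N. if a \<noteq> b then (if t a = x then 1 else 0) * (if t b = y then 1 else 0) else 0)
        + (if t a = x then 1 else 0) * (if t a = y then 1 else (0::real))"
        using a by (simp add: sum.distrib)
      finally show ?thesis .
    qed
    then show "(\<Sum>b<N. if a \<noteq> b then (if t a = x then 1 else 0) * (if t b = y then 1 else 0) else 0)
     = (\<Sum>b<N. (if t a = x then 1 else 0) * (if t b = y then 1 else 0))
          - (if t a = x then 1 else 0) * (if t a = y then 1 else (0::real))" by simp
  qed
  also have "\<dots> = occ N t x * occ N t y - (\<Sum>a<N. (if t a = x then 1 else 0) * (if t a = y then 1 else (0::real)))"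
    unfolding occ_def sum_product by (simp add: sum_subtractf)
  also have "(\<Sum>a<N. (if t a = x then 1 else 0) * (if t a = y then 1 else (0::real))) = (if x = y then occ N t x else 0)"
    unfolding occ_def by (cases "x = y") (auto intro!: sum.cong sum.neutral)
  finally show ?thesis .
qed

lemma pm_Pt:
  assumes ps: "psym X N g" and N: "N \<ge> 2" and p: "p \<in> X \<times> X"
  shows "pm X N g p = (\<Sum>t\<in>tuples X N. g t * Pt X N t p)"
proof -
  obtain x y where xy: "p = (x, y)" by (cases p)
  define S where "S a b = (\<Sum>t\<in>tuples X N. g t * (if t a = x \<and> t b = y then 1 else 0))" for a b
  have S01: "S a b = S 0 1" if ab: "a < N" "b < N" "a \<noteq> b" for a b
  proof -
    obtain \<sigma> where s: "\<sigma> permutes {..<N}" "\<sigma> 0 = a" "\<sigma> 1 = b"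
      using exists_perm[OF ab N] by blast
    show ?thesis using psym_reindex[OF ps s(1) N, of x y] s unfolding S_def by simp
  qed
  have "(\<Sum>a<N. \<Sum>b<N. if a \<noteq> b then S a b else 0) = (\<Sum>a<N. \<Sum>b<N. if a \<noteq> b then S 0 1 else 0)"
  proof (intro sum.cong refl)
    fix a b assume "a \<in> {..<N}" "b \<in> {..<N}"
    then show "(if a \<noteq> b then S a b else 0) = (if a \<noteq> b then S 0 1 else 0)"
      using S01[of a b] by (cases "a = b") simp_all
  qed
  also have "\<dots> = (\<Sum>a<N. (real N - 1) * S 0 1)"
  proof (rule sum.cong[OF refl])
    fix a assume a: "a \<in> {..<N}"
    have "(\<Sum>b<N. if a \<noteq> b then S 0 1 else 0) = (\<Sum>b\<in>{..<N} - {a}. S 0 1)"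
      by (rule sum.mono_neutral_cong_right) auto
    also have "\<dots> = (real N - 1) * S 0 1" using a by (simp add: of_nat_diff)
    finally show "(\<Sum>b<N. if a \<noteq> b then S 0 1 else 0) = (real N - 1) * S 0 1" .
  qed
  also have "\<dots> = real N * (real N - 1) * S 0 1" by simp
  finally have e1: "(\<Sum>a<N. \<Sum>b<N. if a \<noteq> b then S a b else 0) = real N * (real N - 1) * S 0 1" .
  have "(\<Sum>a<N. \<Sum>b<N. if a \<noteq> b then S a b else 0)
     = (\<Sum>a<N. \<Sum>b<N. \<Sum>t\<in>tuples X N. g t * (if a \<noteq> b then (if t a = x then 1 else 0) * (if t b = y then 1 else 0) else 0))"
    unfolding S_def by (intro sum.cong refl) (auto simp: sum_distrib_left intro!: sum.cong)
  also have "\<dots> = (\<Sum>t\<in>tuples X N. g t * (\<Sum>a<N. \<Sum>b<N. if a \<noteq> b then (if t a = x then 1 else 0) * (if t b = y then 1 else 0) else 0))"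
    (is "?L = ?R")
  proof -
    define h where "h a b t = g t * (if a \<noteq> b then (if t a = x then 1 else 0) * (if t b = y then 1 else 0) else (0::real))" for a b t
    have "?R = (\<Sum>t\<in>tuples X N. \<Sum>a<N. \<Sum>b<N. h a b t)"
      unfolding h_def by (simp add: sum_distrib_left)
    also have "\<dots> = (\<Sum>a<N. \<Sum>t\<in>tuples X N. \<Sum>b<N. h a b t)"
      by (rule sum.swap)
    also have "\<dots> = (\<Sum>a<N. \<Sum>b<N. \<Sum>t\<in>tuples X N. h a b t)"
      by (rule sum.cong[OF refl], rule sum.swap)
    also have "\<dots> = ?L" unfolding h_def by simp
    finally show ?thesis by simp
  qed
  also have "\<dots> = (\<Sum>t\<in>tuples X N. g t * (occ N t x * occ N t y - (if x = y then occ N t x else 0)))"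
    by (simp add: pair_count)
  finally have e2: "real N * (real N - 1) * S 0 1 = (\<Sum>t\<in>tuples X N. g t * (occ N t x * occ N t y - (if x = y then occ N t x else 0)))"
    using e1 by simp
  have pos: "real N * (real N - 1) > 0" using N by simp
  have "pm X N g p = S 0 1" unfolding pm_def S_def xy by (intro sum.cong) auto
  also have "\<dots> = (real N * (real N - 1) * S 0 1) / (real N * (real N - 1))"
    by (rule nonzero_mult_div_cancel_left[symmetric]) (use N in simp)
  also have "\<dots> = (\<Sum>t\<in>tuples X N. g t * (occ N t x * occ N t y - (if x = y then occ N t x else 0))) / (real N * (real N - 1))"
    by (simp only: e2)
  also have "\<dots> = (\<Sum>t\<in>tuples X N. g t * Pt X N t p)"
    unfolding Pt_def xy using p xy by (simp add: sum_divide_distrib, intro sum.cong refl, simp)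
  finally show ?thesis .
qed


lemma tuple_in: "t \<in> tuples X N \<Longrightarrow> a < N \<Longrightarrow> t a \<in> X"
  unfolding tuples_def by (simp add: PiE_iff)

lemma pm_outside: assumes N: "N \<ge> 2" and p: "p \<notin> X \<times> X" shows "pm X N g p = 0"
  unfolding pm_def
proof (rule sum.neutral, intro ballI)
  fix t assume t: "t \<in> tuples X N"
  have "(t 0, t 1) \<in> X \<times> X" using tuple_in[OF t, of 0] tuple_in[OF t, of 1] N by simp
  then show "g t * (if (t 0, t 1) = p then 1 else 0) = 0" using p by auto
qed

lemma pm_Pt_fun:
  assumes ps: "psym X N g" and N: "N \<ge> 2"
  shows "pm X N g = (\<lambda>p. \<Sum>t\<in>tuples X N. g t * Pt X N t p)"
proof
  fix p show "pm X N g p = (\<Sum>t\<in>tuples X N. g t * Pt X N t p)"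
  proof (cases "p \<in> X \<times> X")
    case True then show ?thesis using pm_Pt[OF ps N] by simp
  next
    case False then show ?thesis using pm_outside[OF N False] by (simp add: Pt_def)
  qed
qed

lemma Nrep_pm:
  assumes m: "\<mu> \<in> N_rep X N" and N: "N \<ge> 2" and X: "finite X"
  shows "\<exists>\<gamma>. prob_on (tuples X N) \<gamma> \<and> psym X N \<gamma> \<and> \<mu> = pm X N \<gamma>"
proof -
  obtain \<gamma> where pr: "prob_on (X \<times> X) \<mu>" and g: "prob_on (tuples X N) \<gamma>" and sy: "symmetric_meas X N \<gamma>"
    and mm: "\<And>A. A \<subseteq> X \<times> X \<Longrightarrow> meas \<mu> A = meas \<gamma> {t \<in> tuples X N. (t 0, t 1) \<in> A}"
    using m unfolding N_rep_def by blast
  have "\<mu> = pm X N \<gamma>"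
  proof
    fix p show "\<mu> p = pm X N \<gamma> p"
    proof (cases "p \<in> X \<times> X")
      case True
      have "\<mu> p = meas \<mu> {p}" by (simp add: meas_def)
      also have "\<dots> = meas \<gamma> {t \<in> tuples X N. (t 0, t 1) \<in> {p}}" using mm True by simp
      also have "\<dots> = pm X N \<gamma> p"
        unfolding meas_def pm_def using finite_tuples[OF X, of N]
        by (simp add: sum.inter_filter if_distrib cong: if_cong)
      finally show ?thesis .
    next
      case False
      have "\<mu> p = 0" using pr False unfolding prob_on_def by blast
      then show ?thesis using pm_outside[OF N False] by simp
    qed
  qed
  then show ?thesis using g sym_psym[OF sy] by blast
qed

lemma pm_Nrep:
  assumes g: "prob_on (tuples X N) \<gamma>" and ps: "psym X N \<gamma>" and N: "N \<ge> 2" and X: "finite X"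
  shows "pm X N \<gamma> \<in> N_rep X N"
proof -
  have fT: "finite (tuples X N)" using finite_tuples[OF X] .
  have key: "meas (pm X N \<gamma>) A = meas \<gamma> {t \<in> tuples X N. (t 0, t 1) \<in> A}" if A: "finite A" for A
  proof -
    have "meas (pm X N \<gamma>) A = (\<Sum>p\<in>A. \<Sum>t\<in>tuples X N. \<gamma> t * (if (t 0, t 1) = p then 1 else 0))"
      by (simp add: meas_def pm_def)
    also have "\<dots> = (\<Sum>t\<in>tuples X N. \<Sum>p\<in>A. \<gamma> t * (if (t 0, t 1) = p then 1 else 0))"
      by (rule sum.swap)
    also have "\<dots> = (\<Sum>t\<in>tuples X N. \<gamma> t * (if (t 0, t 1) \<in> A then 1 else 0))"
      using A by (simp add: sum_distrib_left[symmetric] sum.delta)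
    also have "\<dots> = meas \<gamma> {t \<in> tuples X N. (t 0, t 1) \<in> A}"
      unfolding meas_def using fT by (simp add: sum.inter_filter, intro sum.cong refl, simp)
    finally show ?thesis .
  qed
  have "prob_on (X \<times> X) (pm X N \<gamma>)"
    unfolding prob_on_def
  proof (intro conjI allI impI)
    fix p show "0 \<le> pm X N \<gamma> p" unfolding pm_def using g unfolding prob_on_def
      by (intro sum_nonneg) auto
  next
    fix p assume "p \<notin> X \<times> X" then show "pm X N \<gamma> p = 0" using pm_outside[OF N] by blast
  next
    have "(\<Sum>p\<in>X \<times> X. pm X N \<gamma> p) = meas \<gamma> {t \<in> tuples X N. (t 0, t 1) \<in> X \<times> X}"
      using key[of "X \<times> X"] X by (simp add: meas_def)
    also have "{t \<in> tuples X N. (t 0, t 1) \<in> X \<times> X} = tuples X N"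
      using tuple_in[of _ X N 0] tuple_in[of _ X N 1] N by auto
    also have "meas \<gamma> (tuples X N) = 1" using g unfolding prob_on_def meas_def by simp
    finally show "(\<Sum>p\<in>X \<times> X. pm X N \<gamma> p) = 1" .
  qed
  moreover have "\<forall>A. A \<subseteq> X \<times> X \<longrightarrow> meas (pm X N \<gamma>) A = meas \<gamma> {t \<in> tuples X N. (t 0, t 1) \<in> A}"
    using key X by (meson finite_SigmaI finite_subset)
  ultimately show ?thesis unfolding N_rep_def using g psym_sym[OF ps] by blast
qed


lemma marg1_lin:
  "marg1 X (\<lambda>p. \<Sum>t\<in>T. w t * f t p) x = (\<Sum>t\<in>T. w t * marg1 X (f t) x)"
  unfolding marg1_def by (simp add: sum_distrib_left) (rule sum.swap)

lemma W_lin: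
  "W_cost X (\<lambda>p. \<Sum>t\<in>T. w t * f t p) = (\<Sum>t\<in>T. w t * W_cost X (f t))"
  unfolding W_cost_def by (simp add: sum_distrib_left mult.left_commute) (rule sum.swap)

lemma J_lin:
  "J_fun X N lam (\<lambda>p. \<Sum>t\<in>T. w t * f t p) = (\<Sum>t\<in>T. w t * J_fun X N lam (f t))"
proof -
  have "(\<Sum>x\<in>X. lam x * marg1 X (\<lambda>p. \<Sum>t\<in>T. w t * f t p) x)
      = (\<Sum>t\<in>T. w t * (\<Sum>x\<in>X. lam x * marg1 X (f t) x))"
    unfolding marg1_lin by (simp add: sum_distrib_left mult.left_commute) (rule sum.swap)
  then show ?thesis unfolding J_fun_def W_lin
    by (simp add: sum.distrib distrib_left sum_distrib_left mult.left_commute)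
qed

lemma occ_sum: assumes t: "t \<in> tuples X N" and X: "finite X"
  shows "(\<Sum>x\<in>X. occ N t x) = real N"
proof -
  have "(\<Sum>x\<in>X. occ N t x) = (\<Sum>a<N. \<Sum>x\<in>X. if t a = x then 1 else (0::real))"
    unfolding occ_def by (rule sum.swap)
  also have "\<dots> = (\<Sum>a<N. 1)"
  proof (rule sum.cong[OF refl])
    fix a assume "a \<in> {..<N}"
    then have "t a \<in> X" using tuple_in[OF t] by simp
    then show "(\<Sum>x\<in>X. if t a = x then 1 else (0::real)) = 1" using X by (simp add: sum.delta)
  qed
  finally show ?thesis by simp
qed

lemma occ_out: assumes t: "t \<in> tuples X N" and x: "x \<notin> X" shows "occ N t x = 0"
  unfolding occ_def using tuple_in[OF t] x by (intro sum.neutral) auto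

lemma occ_phi: assumes s: "\<sigma> permutes {..<N}" shows "occ N (phi N \<sigma> t) x = occ N t x"
proof -
  have "occ N t x = (\<Sum>a<N. (\<lambda>a. if t a = x then 1 else (0::real)) (\<sigma> a))"
    unfolding occ_def using sum.permute[OF s, of "\<lambda>a. if t a = x then 1 else (0::real)"] by simp
  also have "\<dots> = occ N (phi N \<sigma> t) x" unfolding occ_def phi_def by simp
  finally show ?thesis by simp
qed

lemma marg1_Pt: assumes t: "t \<in> tuples X N" and X: "finite X" and N: "N \<ge> 2" and x: "x \<in> X"
  shows "marg1 X (Pt X N t) x = occ N t x / real N"
proof -
  have D: "real N * (real N - 1) \<noteq> 0" using N by simp
  have "marg1 X (Pt X N t) x = (\<Sum>y\<in>X. (occ N t x * occ N t y - (if x = y then occ N t x else 0))) / (real N * (real N - 1))"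
    unfolding marg1_def Pt_def using x by (simp add: sum_divide_distrib, intro sum.cong refl, simp)
  also have "(\<Sum>y\<in>X. (occ N t x * occ N t y - (if x = y then occ N t x else 0))) = occ N t x * real N - occ N t x"
    using x X by (simp add: sum_subtractf sum_distrib_left[symmetric] occ_sum[OF t X] sum.delta)
  also have "(occ N t x * real N - occ N t x) / (real N * (real N - 1)) = occ N t x / real N"
    using D by (simp add: field_simps)
  finally show ?thesis .
qed

lemma W_Pt: assumes t: "t \<in> tuples X N" and X: "finite X" and N: "N \<ge> 2"
  shows "W_cost X (Pt X N t) = (real N ^ 2 - (\<Sum>x\<in>X. occ N t x ^ 2)) / (real N * (real N - 1))"
proof -
  have "W_cost X (Pt X N t) = (\<Sum>x\<in>X. \<Sum>y\<in>X. (if x \<noteq> y then 1 else 0) * Pt X N t (x, y))"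
    unfolding W_cost_def sum.cartesian_product by (intro sum.cong refl) (auto simp: case_prod_beta)
  also have "\<dots> = (\<Sum>x\<in>X. \<Sum>y\<in>X. (occ N t x * occ N t y - (if x = y then occ N t x * occ N t x else 0)) / (real N * (real N - 1)))"
    unfolding Pt_def by (intro sum.cong refl) auto
  also have "\<dots> = (\<Sum>x\<in>X. occ N t x * real N - occ N t x * occ N t x) / (real N * (real N - 1))"
    using X by (simp add: sum_divide_distrib[symmetric] sum_subtractf sum_distrib_left[symmetric] occ_sum[OF t X] sum.delta)
  also have "(\<Sum>x\<in>X. occ N t x * real N - occ N t x * occ N t x) = real N ^ 2 - (\<Sum>x\<in>X. occ N t x ^ 2)"
    by (simp add: sum_subtractf sum_distrib_right[symmetric] occ_sum[OF t X] power2_eq_square)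
  finally show ?thesis .
qed

lemma J_aux: fixes n S Q :: real assumes "n \<noteq> 0" "n - 1 \<noteq> 0"
  shows "2 * n / (n - 1) * (S / n) + (n ^ 2 - Q) / (n * (n - 1)) = (2 * n * S + n ^ 2 - Q) / (n * (n - 1))"
proof -
  have "2 * n / (n - 1) * (S / n) = (2 * n * S) / (n * (n - 1))"
    by (simp add: times_divide_times_eq mult.commute mult.left_commute)
  then show ?thesis by (simp only: add_diff_eq[symmetric] add_divide_distrib)
qed

lemma J_Pt: assumes t: "t \<in> tuples X N" and X: "finite X" and N: "N \<ge> 2"
  shows "J_fun X N lam (Pt X N t) = (2 * real N * (\<Sum>x\<in>X. lam x * occ N t x) + real N ^ 2 - (\<Sum>x\<in>X. occ N t x ^ 2)) / (real N * (real N - 1))"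
proof -
  have D: "real N * (real N - 1) \<noteq> 0" "real N - 1 \<noteq> 0" "real N \<noteq> 0" using N by auto
  have "(\<Sum>x\<in>X. lam x * marg1 X (Pt X N t) x) = (\<Sum>x\<in>X. lam x * occ N t x) / real N"
    using marg1_Pt[OF t X N] by (simp add: sum_divide_distrib)
  then show ?thesis unfolding J_fun_def W_Pt[OF t X N] using J_aux[OF D(3) D(2)]
    by simp
qed


definition same :: "'a set \<Rightarrow> nat \<Rightarrow> (nat \<Rightarrow> 'a) \<Rightarrow> (nat \<Rightarrow> 'a) \<Rightarrow> bool" where
  "same X N t s \<longleftrightarrow> (\<forall>x\<in>X. occ N t x = occ N s x)"

lemma Pt_same: "same X N t s \<Longrightarrow> Pt X N t = Pt X N s"
  unfolding same_def Pt_def by (intro ext) auto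

lemma J_gap:
  assumes t: "t \<in> tuples X N" and s: "s \<in> tuples X N" and X: "finite X" and N: "N \<ge> 2"
    and lam: "\<forall>x\<in>X. lam x = occ N s x / real N"
  shows "J_fun X N lam (Pt X N s) - J_fun X N lam (Pt X N t)
       = (\<Sum>x\<in>X. (occ N s x - occ N t x) ^ 2) / (real N * (real N - 1))"
proof -
  have NZ: "real N \<noteq> 0" using N by simp
  have L: "2 * real N * (\<Sum>x\<in>X. lam x * occ N u x) = 2 * (\<Sum>x\<in>X. occ N s x * occ N u x)" for u
  proof -
    have "(\<Sum>x\<in>X. lam x * occ N u x) = (\<Sum>x\<in>X. occ N s x * occ N u x) / real N"
      using lam by (simp add: sum_divide_distrib)
    then show ?thesis using NZ by simp
  qed
  have "J_fun X N lam (Pt X N s) - J_fun X N lam (Pt X N t)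
     = ((2 * (\<Sum>x\<in>X. occ N s x * occ N s x) + real N ^ 2 - (\<Sum>x\<in>X. occ N s x ^ 2))
       - (2 * (\<Sum>x\<in>X. occ N s x * occ N t x) + real N ^ 2 - (\<Sum>x\<in>X. occ N t x ^ 2))) / (real N * (real N - 1))"
    unfolding J_Pt[OF s X N] J_Pt[OF t X N] L by (rule diff_divide_distrib[symmetric])
  also have "(2 * (\<Sum>x\<in>X. occ N s x * occ N s x) + real N ^ 2 - (\<Sum>x\<in>X. occ N s x ^ 2))
       - (2 * (\<Sum>x\<in>X. occ N s x * occ N t x) + real N ^ 2 - (\<Sum>x\<in>X. occ N t x ^ 2))
       = (\<Sum>x\<in>X. (occ N s x - occ N t x) ^ 2)"
    by (simp add: power2_eq_square algebra_simps sum.distrib sum_subtractf sum_distrib_left)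
  finally show ?thesis .
qed

lemma J_pm_lt:
  assumes g: "prob_on (tuples X N) g" and ps: "psym X N g" and s: "s \<in> tuples X N"
    and X: "finite X" and N: "N \<ge> 2" and lam: "\<forall>x\<in>X. lam x = occ N s x / real N"
    and t2: "t2 \<in> tuples X N" "g t2 > 0" "\<not> same X N t2 s"
  shows "J_fun X N lam (pm X N g) < J_fun X N lam (Pt X N s)"
proof -
  have fT: "finite (tuples X N)" using finite_tuples[OF X] .
  have D: "real N * (real N - 1) > 0" using N by simp
  have gap: "0 \<le> J_fun X N lam (Pt X N s) - J_fun X N lam (Pt X N t)" if t: "t \<in> tuples X N" for t
    unfolding J_gap[OF t s X N lam] using D by (intro divide_nonneg_pos sum_nonneg) auto
  have gap2: "0 < J_fun X N lam (Pt X N s) - J_fun X N lam (Pt X N t2)"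
  proof -
    obtain x where x: "x \<in> X" "occ N t2 x \<noteq> occ N s x" using t2(3) unfolding same_def by blast
    have "0 < (\<Sum>x\<in>X. (occ N s x - occ N t2 x) ^ 2)"
      using x X by (intro sum_pos2[of X x]) auto
    then show ?thesis unfolding J_gap[OF t2(1) s X N lam] using D by simp
  qed
  have sum1: "(\<Sum>t\<in>tuples X N. g t) = 1" using g unfolding prob_on_def by simp
  have "J_fun X N lam (Pt X N s) - J_fun X N lam (pm X N g)
      = (\<Sum>t\<in>tuples X N. g t * (J_fun X N lam (Pt X N s) - J_fun X N lam (Pt X N t)))"
    unfolding pm_Pt_fun[OF ps N] J_lin
    by (simp add: right_diff_distrib sum_subtractf sum_distrib_right[symmetric] sum1)
  also have "\<dots> > 0"
    using gap gap2 g t2 fT unfolding prob_on_def by (intro sum_pos2[of _ t2]) auto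
  finally show ?thesis by simp
qed

lemma pm_const:
  assumes g: "prob_on (tuples X N) g" and ps: "psym X N g" and N: "N \<ge> 2"
    and sm: "\<forall>t\<in>tuples X N. g t > 0 \<longrightarrow> same X N t s"
  shows "pm X N g = Pt X N s"
proof
  fix p
  have "pm X N g p = (\<Sum>t\<in>tuples X N. g t * Pt X N t p)" using pm_Pt_fun[OF ps N] by simp
  also have "\<dots> = (\<Sum>t\<in>tuples X N. g t * Pt X N s p)"
  proof (rule sum.cong[OF refl])
    fix t assume t: "t \<in> tuples X N"
    show "g t * Pt X N t p = g t * Pt X N s p"
    proof (cases "g t > 0")
      case True then show ?thesis using sm t Pt_same by metis
    next
      case False
      have "0 \<le> g t" using g unfolding prob_on_def by blast
      with False have "g t = 0" by linarith
      then show ?thesis by simp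
    qed
  qed
  also have "\<dots> = Pt X N s p" using g unfolding prob_on_def by (simp add: sum_distrib_right[symmetric])
  finally show "pm X N g p = Pt X N s p" .
qed

lemma pm_comb:
  assumes "\<forall>t\<in>tuples X N. g t = \<alpha> * g1 t + \<beta> * g2 t"
  shows "pm X N g p = \<alpha> * pm X N g1 p + \<beta> * pm X N g2 p"
  unfolding pm_def using assms
  by (simp add: sum_distrib_left sum.distrib[symmetric] algebra_simps)


lemma extreme_support:
  assumes X: "finite X" and N: "N \<ge> 2" and ext: "extreme_pt \<mu>s (N_rep X N)"
    and g: "prob_on (tuples X N) \<gamma>" and ps: "psym X N \<gamma>" and mu: "\<mu>s = pm X N \<gamma>"
    and s0: "s0 \<in> tuples X N" "\<gamma> s0 > 0"
  shows "\<forall>t\<in>tuples X N. \<gamma> t > 0 \<longrightarrow> same X N t s0"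
proof (rule ccontr)
  assume "\<not> ?thesis"
  then obtain t2 where t2: "t2 \<in> tuples X N" "\<gamma> t2 > 0" "\<not> same X N t2 s0" by blast
  define T where "T = tuples X N"
  have fT: "finite T" unfolding T_def using finite_tuples[OF X] .
  define A where "A = {t \<in> T. same X N t s0}"
  have AT: "A \<subseteq> T" unfolding A_def by auto
  have fA: "finite A" using fT AT finite_subset by blast
  have nn: "\<And>t. 0 \<le> \<gamma> t" using g unfolding prob_on_def by blast
  define c where "c = (\<Sum>t\<in>A. \<gamma> t)"
  have s0A: "s0 \<in> A" unfolding A_def T_def same_def using s0 by auto
  have t2A: "t2 \<in> T - A" unfolding A_def T_def using t2 by auto
  have c0: "c > 0"
  proof -
    have "\<gamma> s0 \<le> c" unfolding c_def using fA s0A nn by (intro member_le_sum) auto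
    then show ?thesis using s0 by linarith
  qed
  have tot: "(\<Sum>t\<in>T. \<gamma> t) = 1" using g unfolding prob_on_def T_def by simp
  have split: "(\<Sum>t\<in>T. \<gamma> t) = c + (\<Sum>t\<in>T - A. \<gamma> t)"
    unfolding c_def using sum.subset_diff[OF AT fT, of \<gamma>] by simp
  have "\<gamma> t2 \<le> (\<Sum>t\<in>T - A. \<gamma> t)" using fT t2A nn by (intro member_le_sum) auto
  then have c1: "1 - c > 0" using tot split t2 by linarith
  define gA where "gA t = (if t \<in> A then \<gamma> t / c else 0)" for t
  define gB where "gB t = (if t \<in> T - A then \<gamma> t / (1 - c) else 0)" for t
  have sumA: "(\<Sum>t\<in>T. gA t) = 1"
  proof -
    have "(\<Sum>t\<in>T. gA t) = (\<Sum>t\<in>T \<inter> A. \<gamma> t / c)"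
      unfolding gA_def using fT by (simp add: sum.inter_restrict)
    also have "T \<inter> A = A" using AT by auto
    finally show ?thesis using c0 unfolding c_def by (simp add: sum_divide_distrib[symmetric])
  qed
  have sumB: "(\<Sum>t\<in>T. gB t) = 1"
  proof -
    have "(\<Sum>t\<in>T. gB t) = (\<Sum>t\<in>T \<inter> (T - A). \<gamma> t / (1 - c))"
      unfolding gB_def using fT by (simp add: sum.inter_restrict)
    also have "T \<inter> (T - A) = T - A" by auto
    finally show ?thesis using c1 tot split by (simp add: sum_divide_distrib[symmetric])
  qed
  have pA: "prob_on T gA" unfolding prob_on_def
    using sumA nn c0 AT unfolding gA_def by auto
  have pB: "prob_on T gB" unfolding prob_on_def
    using sumB nn c1 unfolding gB_def by auto
  have sameinv: "same X N (phi N \<sigma> t) s0 = same X N t s0" if "\<sigma> permutes {..<N}" for \<sigma> t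
    unfolding same_def by (simp add: occ_phi[OF that])
  have psA: "psym X N gA" unfolding psym_def
  proof (intro ballI allI impI)
    fix t \<sigma> assume t: "t \<in> tuples X N" and s: "\<sigma> permutes {..<N}"
    have "phi N \<sigma> t \<in> T" using phi_in[OF s t] unfolding T_def .
    then show "gA (phi N \<sigma> t) = gA t" using t ps s sameinv[OF s, of t]
      unfolding gA_def A_def T_def psym_def by auto
  qed
  have psB: "psym X N gB" unfolding psym_def
  proof (intro ballI allI impI)
    fix t \<sigma> assume t: "t \<in> tuples X N" and s: "\<sigma> permutes {..<N}"
    have "phi N \<sigma> t \<in> T" using phi_in[OF s t] unfolding T_def .
    then show "gB (phi N \<sigma> t) = gB t" using t ps s sameinv[OF s, of t]
      unfolding gB_def A_def T_def psym_def by auto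
  qed
  have aN: "pm X N gA \<in> N_rep X N" using pm_Nrep[OF pA[unfolded T_def] psA N X] .
  have bN: "pm X N gB \<in> N_rep X N" using pm_Nrep[OF pB[unfolded T_def] psB N X] .
  define lam0 where "lam0 x = occ N s0 x / real N" for x
  have lam0: "\<forall>x\<in>X. lam0 x = occ N s0 x / real N" unfolding lam0_def by simp
  have a_eq: "pm X N gA = Pt X N s0"
  proof (rule pm_const[OF pA[unfolded T_def] psA N])
    show "\<forall>t\<in>tuples X N. 0 < gA t \<longrightarrow> same X N t s0"
      unfolding gA_def A_def by auto
  qed
  have gBt2: "gB t2 > 0" unfolding gB_def using t2A t2 c1 by simp
  have "J_fun X N lam0 (pm X N gB) < J_fun X N lam0 (Pt X N s0)"
    using J_pm_lt[OF pB[unfolded T_def] psB s0(1) X N lam0 t2(1) gBt2 t2(3)] .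
  then have ab: "pm X N gA \<noteq> pm X N gB" using a_eq by auto
  have comb: "\<mu>s = (\<lambda>p. (1 - (1 - c)) * pm X N gA p + (1 - c) * pm X N gB p)"
  proof
    fix p
    have "\<forall>t\<in>tuples X N. \<gamma> t = c * gA t + (1 - c) * gB t"
      using c0 c1 unfolding gA_def gB_def A_def T_def by auto
    then show "\<mu>s p = (1 - (1 - c)) * pm X N gA p + (1 - c) * pm X N gB p"
      unfolding mu using pm_comb by simp
  qed
  have "0 < 1 - c" "1 - c < 1" using c0 c1 by auto
  then show False using ext aN bN ab comb unfolding extreme_pt_def by blast
qed

theorem corollary2p6:
  fixes X :: "'a set" and N :: nat and \<mu>s :: "'a \<times> 'a \<Rightarrow> real" and lam :: "'a \<Rightarrow> real"
  assumes "finite X" and "N \<ge> 2"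
    and "extreme_pt \<mu>s (N_rep X N)"
    and "lam = marg1 X \<mu>s"
  shows "(\<forall>\<mu>\<in>N_rep X N. \<mu> \<noteq> \<mu>s \<longrightarrow> J_fun X N lam \<mu> < J_fun X N lam \<mu>s)
       \<and> (\<forall>\<mu>\<in>N_rep X N. marg1 X \<mu> = lam \<and> \<mu> \<noteq> \<mu>s \<longrightarrow> W_cost X \<mu> < W_cost X \<mu>s)"
proof -
  note X = assms(1) and N = assms(2) and ext = assms(3)
  have mN: "\<mu>s \<in> N_rep X N" using ext unfolding extreme_pt_def by blast
  obtain \<gamma> where g: "prob_on (tuples X N) \<gamma>" and ps: "psym X N \<gamma>" and mu: "\<mu>s = pm X N \<gamma>"
    using Nrep_pm[OF mN N X] by blast
  have "\<exists>s0\<in>tuples X N. \<gamma> s0 > 0"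
  proof (rule ccontr)
    assume "\<not> ?thesis"
    then have "\<forall>t\<in>tuples X N. \<gamma> t = 0" using g unfolding prob_on_def
      by (meson linorder_not_less order_antisym)
    then have "(\<Sum>t\<in>tuples X N. \<gamma> t) = 0" by simp
    then show False using g unfolding prob_on_def by simp
  qed
  then obtain s0 where s0: "s0 \<in> tuples X N" "\<gamma> s0 > 0" by blast
  have allsame: "\<forall>t\<in>tuples X N. \<gamma> t > 0 \<longrightarrow> same X N t s0"
    using extreme_support[OF X N ext g ps mu s0] .
  have muP: "\<mu>s = Pt X N s0" using mu pm_const[OF g ps N allsame] by simp
  have lamx: "\<forall>x\<in>X. lam x = occ N s0 x / real N"
    using assms(4) muP marg1_Pt[OF s0(1) X N] by simp
  have A: "\<forall>\<mu>\<in>N_rep X N. \<mu> \<noteq> \<mu>s \<longrightarrow> J_fun X N lam \<mu> < J_fun X N lam \<mu>s"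
  proof (intro ballI impI)
    fix \<mu> assume m: "\<mu> \<in> N_rep X N" and ne: "\<mu> \<noteq> \<mu>s"
    obtain g' where g': "prob_on (tuples X N) g'" and ps': "psym X N g'" and mu': "\<mu> = pm X N g'"
      using Nrep_pm[OF m N X] by blast
    have "\<not> (\<forall>t\<in>tuples X N. g' t > 0 \<longrightarrow> same X N t s0)"
    proof
      assume "\<forall>t\<in>tuples X N. g' t > 0 \<longrightarrow> same X N t s0"
      then have "\<mu> = Pt X N s0" using mu' pm_const[OF g' ps' N] by simp
      then show False using ne muP by simp
    qed
    then obtain t2 where t2: "t2 \<in> tuples X N" "g' t2 > 0" "\<not> same X N t2 s0" by blast
    show "J_fun X N lam \<mu> < J_fun X N lam \<mu>s"
      using J_pm_lt[OF g' ps' s0(1) X N lamx t2] mu' muP by simp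
  qed
  have B: "\<forall>\<mu>\<in>N_rep X N. marg1 X \<mu> = lam \<and> \<mu> \<noteq> \<mu>s \<longrightarrow> W_cost X \<mu> < W_cost X \<mu>s"
  proof (intro ballI impI)
    fix \<mu> assume m: "\<mu> \<in> N_rep X N" and h: "marg1 X \<mu> = lam \<and> \<mu> \<noteq> \<mu>s"
    have "J_fun X N lam \<mu> < J_fun X N lam \<mu>s" using A m h by blast
    then show "W_cost X \<mu> < W_cost X \<mu>s"
      unfolding J_fun_def using h assms(4) by simp
  qed
  show ?thesis using A B by blast
qed

end
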